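(* Consider the $4$-body problem on the surface $\mathbb{M}^2$ of constant curvature $1$, with four particles on one geodesic (the real axis) with masses $m_1=m_2=1$, $m_3=m_4=m>0$, in a symmetric configuration with initial positions $z_1=-z_2=a>0$ and $z_3=-z_4=r>a$. Then there do not exist relative equilibria.
   Context: $\mathbb{M}^2$ is the complex plane with metric $ds^2=\frac{4\,dz\,d\bar z}{(1+|z|^2)^2}$; the distance satisfies $\cos d(z_k,z_j)=\frac{2(z_k\bar z_j+z_j\bar z_k)+(|z_k|^2-1)(|z_j|^2-1)}{(|z_k|^2+1)(|z_j|^2+1)}$. The curved $n$-body problem has kinetic energy $T=\frac12\sum_i m_i\frac{4|\dot z_i|^2}{(1+|z_i|^2)^2}$ and force function $U=\sum_{i<j}m_im_j\cot d(z_i,z_j)$. A relative equilibrium is a solution invariant under a one-parameter subgroup of isometries; it suffices to consider solutions $w(t)=e^{it}z$. Following earlier work, positions $z_1,\dots,z_n$ ($r_l=|z_l|$) form a relative equilibrium iff for each $i$: $\frac{(1-r_i^2)z_i}{4(1+r_i^2)^4}=-\sum_{j\ne i}\frac{m_j(r_j^2+1)^2(1+z_i\bar z_j)(z_j-z_i)}{T_{ij}^{3/2}}$, with $T_{ij}=(r_i^2+1)^2(r_j^2+1)^2-[2(z_i\bar z_j+z_j\bar z_i)+(r_i^2-1)(r_j^2-1)]^2$. Singular configurations are excluded. *)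

theory Defs
  imports Complex_Main
begin

text \<open>The quantity T_ij of the relative-equilibrium equations. The term
  2(z_i conj z_j + z_j conj z_i) is real; we take its real part.\<close>
definition Tij :: "(nat \<Rightarrow> complex) \<Rightarrow> nat \<Rightarrow> nat \<Rightarrow> real" where
  "Tij z i j =
     ((cmod (z i))^2 + 1)^2 * ((cmod (z j))^2 + 1)^2
     - (2 * Re (z i * cnj (z j) + z j * cnj (z i))
        + ((cmod (z i))^2 - 1) * ((cmod (z j))^2 - 1))^2"

text \<open>Singular configurations: some pair of distinct particles collides or is antipodal,
  i.e. T_ij = 0 (equivalently sin d(z_i,z_j) = 0).\<close>
definition singular_config :: "nat \<Rightarrow> (nat \<Rightarrow> complex) \<Rightarrow> bool" where
  "singular_config n z \<longleftrightarrow> (\<exists>i<n. \<exists>j<n. i \<noteq> j \<and> Tij z i j = 0)"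

definition relative_equilibrium :: "nat \<Rightarrow> (nat \<Rightarrow> real) \<Rightarrow> (nat \<Rightarrow> complex) \<Rightarrow> bool" where
  "relative_equilibrium n m z \<longleftrightarrow>
     (\<forall>i<n. complex_of_real (1 - (cmod (z i))^2) * z i
          / complex_of_real (4 * (1 + (cmod (z i))^2)^4)
        = - (\<Sum>j\<in>{..<n} - {i}.
               complex_of_real (m j * ((cmod (z j))^2 + 1)^2) * (1 + z i * cnj (z j)) * (z j - z i)
               / complex_of_real (Tij z i j powr (3/2))))"

end

theory Submission
  imports Defs
begin


lemma Tij_real:
  assumes "z i = complex_of_real xi" "z j = complex_of_real xj"
  shows "Tij z i j = 4*(xi*xj+1)^2*(xi-xj)^2"
  using assms unfolding Tij_def
  by (simp add: power2_abs) (simp add: power2_eq_square algebra_simps)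

lemma powr32:
  fixes p q :: real
  shows "(4*p^2*q^2) powr (3/2) = 8*\<bar>p\<bar>^3*\<bar>q\<bar>^3"
proof -
  define s where "s = 2*\<bar>p\<bar>*\<bar>q\<bar>"
  have s0: "s \<ge> 0" by (simp add: s_def)
  have "4*p^2*q^2 = s^2" by (simp add: s_def power_mult_distrib power2_abs)
  moreover have "(s^2) powr (3/2) = s^3"
  proof (cases "s = 0")
    case True then show ?thesis by simp
  next
    case False
    then have "s > 0" using s0 by simp
    then have "(s^2) powr (3/2) = (s powr 2) powr (3/2)" by (simp add: powr_realpow)
    also have "\<dots> = s powr 3" by (simp add: powr_powr)
    also have "\<dots> = s^3" using \<open>s>0\<close> by (simp add: powr_realpow)
    finally show ?thesis .
  qed
  ultimately show ?thesis by (simp add: s_def power_mult_distrib)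
qed

lemma re_real:
  assumes re: "relative_equilibrium n m z"
    and zx: "\<And>i. i < n \<Longrightarrow> z i = complex_of_real (x i)"
    and i: "i < n"
  shows "(1 - (x i)^2) * x i / (4*(1+(x i)^2)^4) =
     - (\<Sum>j\<in>{..<n} - {i}. m j * ((x j)^2+1)^2 * (1 + x i * x j) * (x j - x i)
          / (8*\<bar>x i * x j + 1\<bar>^3*\<bar>x i - x j\<bar>^3))"
proof -
  have eq: "complex_of_real (1 - (cmod (z i))^2) * z i
          / complex_of_real (4 * (1 + (cmod (z i))^2)^4)
        = - (\<Sum>j\<in>{..<n} - {i}.
               complex_of_real (m j * ((cmod (z j))^2 + 1)^2) * (1 + z i * cnj (z j)) * (z j - z i)
               / complex_of_real (Tij z i j powr (3/2)))"
    using re i unfolding relative_equilibrium_def by blast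
  have L: "complex_of_real (1 - (cmod (z i))^2) * z i
          / complex_of_real (4 * (1 + (cmod (z i))^2)^4)
         = complex_of_real ((1 - (x i)^2) * x i / (4*(1+(x i)^2)^4))"
    using zx[OF i] by (simp only: norm_of_real power2_abs of_real_mult of_real_divide)
  have R: "(\<Sum>j\<in>{..<n} - {i}.
               complex_of_real (m j * ((cmod (z j))^2 + 1)^2) * (1 + z i * cnj (z j)) * (z j - z i)
               / complex_of_real (Tij z i j powr (3/2)))
        = complex_of_real (\<Sum>j\<in>{..<n} - {i}. m j * ((x j)^2+1)^2 * (1 + x i * x j) * (x j - x i)
          / (8*\<bar>x i * x j + 1\<bar>^3*\<bar>x i - x j\<bar>^3))"
    unfolding of_real_sum
  proof (rule sum.cong[OF refl])
    fix j assume "j \<in> {..<n} - {i}"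
    then have j: "j < n" by simp
    have T: "Tij z i j powr (3/2) = 8*\<bar>x i * x j + 1\<bar>^3*\<bar>x i - x j\<bar>^3"
      using Tij_real[of z i "x i" j "x j", OF zx[OF i] zx[OF j]] powr32 by simp
    show "complex_of_real (m j * ((cmod (z j))^2 + 1)^2) * (1 + z i * cnj (z j)) * (z j - z i)
               / complex_of_real (Tij z i j powr (3/2)) =
          complex_of_real (m j * ((x j)^2+1)^2 * (1 + x i * x j) * (x j - x i)
          / (8*\<bar>x i * x j + 1\<bar>^3*\<bar>x i - x j\<bar>^3))"
      unfolding T using zx[OF i] zx[OF j] by (simp only: norm_of_real power2_abs of_real_mult of_real_divide complex_cnj_complex_of_real of_real_add of_real_1 of_real_diff)
  qed
  show ?thesis using eq unfolding L R of_real_minus[symmetric] of_real_eq_iff .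
qed



definition G :: "real \<Rightarrow> real \<Rightarrow> real \<Rightarrow> real" where
  "G xi xj mj = mj * (xj^2+1)^2 * (1 + xi * xj) * (xj - xi) / (8*\<bar>xi * xj + 1\<bar>^3*\<bar>xi - xj\<bar>^3)"

lemma div_abs3: "(t::real) \<noteq> 0 \<Longrightarrow> t / \<bar>t\<bar>^3 = sgn t / t^2"
  by (cases "t > 0") (auto simp: field_simps power2_eq_square power3_eq_cube)

lemma G_val:
  assumes "xi*xj+1 \<noteq> 0" "xi \<noteq> xj"
  shows "G xi xj mj = mj*(xj^2+1)^2*sgn(xi*xj+1)*sgn(xj-xi)/(8*(xi*xj+1)^2*(xi-xj)^2)"
proof -
  have h1: "xj - xi \<noteq> 0" using assms by simp
  have "G xi xj mj = (mj * (xj^2+1)^2 / 8) * ((xi*xj+1) / \<bar>xi * xj + 1\<bar>^3) * ((xj - xi) / \<bar>xj - xi\<bar>^3)"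
    unfolding G_def by (simp add: abs_minus_commute add.commute mult.commute mult.left_commute)
  also have "\<dots> = (mj * (xj^2+1)^2 / 8) * (sgn(xi*xj+1) / (xi*xj+1)^2) * (sgn (xj - xi) / (xj - xi)^2)"
    using div_abs3[OF assms(1)] div_abs3[OF h1] by simp
  also have "\<dots> = mj*(xj^2+1)^2*sgn(xi*xj+1)*sgn(xj-xi)/(8*(xi*xj+1)^2*(xi-xj)^2)"
    by (simp add: power2_commute)
  finally show ?thesis .
qed


lemma frac_less: "0 < (b::real) \<Longrightarrow> 0 < d \<Longrightarrow> x*d < y*b \<Longrightarrow> x/b < y/d"
  by (simp add: field_simps)

lemma region4:
  fixes a r m :: real
  assumes a: "1 < a" and ar: "a < r" and m: "0 < m"
    and E1: "(1-a^2)*a/(4*(1+a^2)^4) = -(G a (-a) 1 + G a r m + G a (-r) m)"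
  shows False
proof -
  have a0: "0 < a" using a by simp
  have aa: "1 < a*a" using mult_strict_mono[of 1 a 1 a] a by simp
  have ra: "1 < a*r" using mult_strict_mono[of 1 a 1 r] a ar by simp
  have g1: "G a (-a) 1 = (a^2+1)^2/(8*(a*(-a)+1)^2*(a-(-a))^2)"
    using G_val[of a "-a" 1] aa a0 by (simp add: power2_eq_square)
  have g2: "G a r m \<ge> 0"
    using G_val[of a r m] ar a0 m ra by (simp add: add_pos_pos)
  have g3: "G a (-r) m \<ge> 0"
    using G_val[of a "-r" m] ar a0 m ra by (simp add: power2_eq_square)
  define k where "k = 2*a*(a^2-1)"
  have k0: "0 < k" unfolding k_def using aa a0 by (simp add: power2_eq_square)
  have kK: "k < (1+a^2)^2"
  proof -
    have "(1+a^2)^2 - k = a^2*(a-1)^2 + a^2 + 2*a + 1" unfolding k_def by (simp add: algebra_simps power2_eq_square)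
    moreover have "0 < a^2*(a-1)^2 + a^2 + 2*a + 1" using a0 by (simp add: add_pos_nonneg add_nonneg_pos)
    ultimately show ?thesis by linarith
  qed
  have k3: "k^3 < ((1+a^2)^2)^3" using power_strict_mono[OF kK, of 3] k0 by simp
  have lhs: "(a*(a^2-1)) * (8*(a*(-a)+1)^2*(a-(-a))^2) = 4*k^3" unfolding k_def by algebra
  have rhs: "(a^2+1)^2 * (4*(1+a^2)^4) = 4*((1+a^2)^2)^3" by algebra
  have "a*(a^2-1)/(4*(1+a^2)^4) < (a^2+1)^2/(8*(a*(-a)+1)^2*(a-(-a))^2)"
  proof (rule frac_less)
    have "0 < 1+a^2" by (simp add: add_pos_nonneg)
    then show "0 < 4*(1+a^2)^4" by simp
    have "a*(-a)+1 \<noteq> 0" using aa by simp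
    then show "0 < 8*(a*(-a)+1)^2*(a-(-a))^2" using a0 by simp
    show "(a*(a^2-1)) * (8*(a*(-a)+1)^2*(a-(-a))^2) < (a^2+1)^2 * (4*(1+a^2)^4)"
      unfolding lhs rhs using k3 by simp
  qed
  moreover have "(1-a^2)*a/(4*(1+a^2)^4) = - (a*(a^2-1)/(4*(1+a^2)^4))"
    unfolding minus_divide_left by (rule arg_cong[where f="\<lambda>t. t / _"]) algebra
  ultimately show False using E1 g1 g2 g3 by linarith
qed

lemma regionB:
  fixes a r m :: real
  assumes a0: "0 < a" and a1: "a < 1" and r1: "1 < r" and ar1: "a*r < 1" and m: "0 < m"
    and E1: "(1-a^2)*a/(4*(1+a^2)^4) = -(G a (-a) 1 + G a r m + G a (-r) m)"
  shows False
proof -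
  have aa: "a*a < 1" using mult_strict_mono[of a 1 a 1] a0 a1 by simp
  have r0: "0 < r" using r1 by simp
  define C1 where "C1 = (a^2+1)^2/(8*(a*(-a)+1)^2*(a-(-a))^2)"
  define R where "R = (r^2+1)^2"
  define u where "u = (a*(-r)+1)^2*(a-(-r))^2"
  define v where "v = (a*r+1)^2*(a-r)^2"
  have g1: "G a (-a) 1 = - C1"
    using G_val[of a "-a" 1] aa a0 unfolding C1_def by (simp add: power2_eq_square)
  have g2: "G a r m = m*R/(8*v)"
    using G_val[of a r m] a0 r0 a1 r1 mult_pos_pos[OF a0 r0] unfolding R_def v_def by (simp add: mult.assoc)
  have g3: "G a (-r) m = - (m*R/(8*u))"
    using G_val[of a "-r" m] ar1 a0 r0 unfolding R_def u_def by (simp add: mult.commute)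
  have u0: "0 < u" unfolding u_def using ar1 a0 r0 by simp
  have uv: "u < v"
  proof -
    have p: "0 < (1-a*r)*(a+r)" using ar1 a0 r0 by simp
    have "(1-a*r)*(a+r) < (1+a*r)*(r-a)"
    proof -
      have "(1+a*r)*(r-a) - (1-a*r)*(a+r) = 2*a*(r*r-1)" by algebra
      moreover have "0 < 2*a*(r*r-1)" using a0 mult_strict_mono[of 1 r 1 r] r1 by simp
      ultimately show ?thesis by linarith
    qed
    then have "((1-a*r)*(a+r))^2 < ((1+a*r)*(r-a))^2" using p by (simp add: power_strict_mono)
    moreover have "u = ((1-a*r)*(a+r))^2" unfolding u_def by algebra
    moreover have "v = ((1+a*r)*(r-a))^2" unfolding v_def by algebra
    ultimately show ?thesis by simp
  qed
  have "0 < r^2+1" using zero_le_power2[of r] by linarith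
  then have R0: "0 < m*R" unfolding R_def using m by simp
  have "m*R/(8*v) < m*R/(8*u)"
    using R0 u0 uv by (simp add: divide_strict_left_mono)
  then have big: "C1 < (1-a^2)*a/(4*(1+a^2)^4)" using E1 g1 g2 g3 by linarith
  define k where "k = 2*a*(1-a^2)"
  have k0: "0 < k" unfolding k_def using aa a0 by (simp add: power2_eq_square)
  have kK: "k < (1+a^2)^2"
  proof -
    have "(1+a^2)^2 - k = (a-1)^2 + a^2 + a^4 + 2*a^3" unfolding k_def by algebra
    moreover have "0 < (a-1)^2 + a^2 + a^4 + 2*a^3" using a0 by (simp add: add_nonneg_pos add_pos_nonneg)
    ultimately show ?thesis by linarith
  qed
  have k3: "k^3 < ((1+a^2)^2)^3" using power_strict_mono[OF kK, of 3] k0 by simp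
  have lhs: "((1-a^2)*a) * (8*(a*(-a)+1)^2*(a-(-a))^2) = 4*k^3" unfolding k_def by algebra
  have rhs: "(a^2+1)^2 * (4*(1+a^2)^4) = 4*((1+a^2)^2)^3" by algebra
  have "(1-a^2)*a/(4*(1+a^2)^4) < C1"
    unfolding C1_def
  proof (rule frac_less)
    have "0 < 1+a^2" by (simp add: add_pos_nonneg)
    then show "0 < 4*(1+a^2)^4" by simp
    have "a*(-a)+1 \<noteq> 0" using aa by simp
    then show "0 < 8*(a*(-a)+1)^2*(a-(-a))^2" using a0 by simp
    show "((1-a^2)*a) * (8*(a*(-a)+1)^2*(a-(-a))^2) < (a^2+1)^2 * (4*(1+a^2)^4)"
      unfolding lhs rhs using k3 by simp
  qed
  then show False using big by linarith
qed

lemma region1: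
  fixes a r m :: real
  assumes a0: "0 < a" and ar: "a < r" and r1: "r < 1" and m: "0 < m"
    and E3: "(1-r^2)*r/(4*(1+r^2)^4) = -(G r a 1 + G r (-a) 1 + G r (-r) m)"
  shows False
proof -
  have r0: "0 < r" using a0 ar by simp
  have rr: "r*r < 1" using mult_strict_mono[of r 1 r 1] r0 r1 by simp
  have ra: "r*a < 1" using mult_strict_mono[of r 1 a 1] r0 r1 ar a0 by simp
  define c where "c = (a^2+1)^2"
  define P where "P = (r*a+1)^2*(r-a)^2"
  have h1: "G r a 1 = - (c/(8*P))"
    using G_val[of r a 1] a0 r0 ar mult_pos_pos[OF r0 a0] unfolding c_def P_def by (simp add: mult.assoc)
  have h2: "G r (-a) 1 \<le> 0"
    using G_val[of r "-a" 1] a0 r0 ra by (simp add: mult.commute)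
  have h3: "G r (-r) m \<le> 0"
    using G_val[of r "-r" m] r0 rr m by (simp add: power2_eq_square)
  have ge: "c/(8*P) \<le> (1-r^2)*r/(4*(1+r^2)^4)" using E3 h1 h2 h3 by linarith
  have ra0: "r*a+1 \<noteq> 0" using mult_pos_pos[OF r0 a0] by linarith
  have P0: "0 < P" unfolding P_def using ar ra0 by simp
  have P4: "P < 4*r^2"
  proof -
    have "(r*a+1)*(r-a) < 2 * r"
      using mult_strict_mono[of "r*a+1" 2 "r-a" r] ra a0 ar by simp
    then have "((r*a+1)*(r-a))^2 < (2*r)^2" using power_strict_mono[of "(r*a+1)*(r-a)" "2*r" 2] ra a0 ar r0 by simp
    then show ?thesis unfolding P_def by (simp add: power_mult_distrib)
  qed
  have c1: "1 \<le> c" unfolding c_def by (simp add: one_le_power)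
  have q1: "8*r^3 \<le> (1+r^2)^3"
  proof -
    have "2*r \<le> 1+r^2" using sum_squares_bound[of r 1] by (simp add: power2_eq_square algebra_simps)
    then have "(2*r)^3 \<le> (1+r^2)^3" using power_mono r0 by (metis less_eq_real_def mult_pos_pos zero_less_numeral)
    then show ?thesis by simp
  qed
  have "(1-r^2)*r * (8*P) \<le> (1-r^2)*r*(32*r^2)"
    using P4 rr r0 by (simp add: power2_eq_square)
  also have "\<dots> = 4*(8*r^3)*(1-r^2)" by algebra
  also have "\<dots> < 4*(1+r^2)^3*(1+r^2)"
  proof -
    have "0 < 8*r^3" using r0 by simp
    moreover have "1-r^2 < 1+r^2" using r0 by simp
    moreover have "0 < 1 - r^2" using rr by (simp add: power2_eq_square)
    ultimately have "8*r^3*(1-r^2) < (1+r^2)^3*(1+r^2)"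
      using q1 by (meson mult_le_less_imp_less less_eq_real_def)
    then show ?thesis by (simp add: algebra_simps)
  qed
  also have "\<dots> \<le> c * (4*(1+r^2)^4)"
  proof -
    have "4*(1+r^2)^3*(1+r^2) = 1 * (4*(1+r^2)^4)" by algebra
    also have "\<dots> \<le> c * (4*(1+r^2)^4)" using c1 by (intro mult_right_mono) simp_all
    finally show ?thesis .
  qed
  finally have fin: "(1-r^2)*r * (8*P) < c * (4*(1+r^2)^4)" .
  have "(1-r^2)*r/(4*(1+r^2)^4) < c/(8*P)"
  proof (rule frac_less)
    have "0 < 1+r^2" using zero_le_power2[of r] by linarith
    then show "0 < 4*(1+r^2)^4" by simp
    show "0 < 8*P" using P0 by simp
  qed (rule fin)
  then show False using ge by linarith
qed



lemma frac_le: "0 < (b::real) \<Longrightarrow> 0 < d \<Longrightarrow> x*d \<le> y*b \<Longrightarrow> x/b \<le> y/d"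
  by (simp add: field_simps)

lemma poly_ineq:
  fixes t :: real assumes t: "t > 0"
  shows "4*(1+t)^5*t^3*(2+t)^5 < (1+(1+t)^2)^8"
proof -
  have e: "(1+(1+t)^2)^8 - 4*(1+t)^5*t^3*(2+t)^5 = 256 + 2048*t + 8192*t^2 + 21376*t^3 + 40256*t^4
     + 57728*t^5 + 65440*t^6 + 60472*t^7 + 46612*t^8 + 30236*t^9 + 16360*t^10 + 7216*t^11
     + 2516*t^12 + 668*t^13 + 128*t^14 + 16*t^15 + t^16"
    by (simp add: algebra_simps eval_nat_numeral)
  have "0 < 256 + 2048*t + 8192*t^2 + 21376*t^3 + 40256*t^4
     + 57728*t^5 + 65440*t^6 + 60472*t^7 + 46612*t^8 + 30236*t^9 + 16360*t^10 + 7216*t^11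
     + 2516*t^12 + 668*t^13 + 128*t^14 + 16*t^15 + t^16"
    using t by (simp add: add_pos_pos)
  then show ?thesis using e by linarith
qed

lemma poly_r:
  fixes r :: real assumes "1 < r"
  shows "4*r^5*(r-1)^3*(r+1)^5 < (1+r^2)^8"
  using poly_ineq[of "r-1"] assms by (simp add: algebra_simps)

lemma Zeq:
  fixes a r c al be P Q :: real
  assumes "a \<noteq> 0" "al \<noteq> 0" "r \<noteq> 0" "be \<noteq> 0" "P \<noteq> 0" "Q \<noteq> 0"
  shows "4*(c*a*r*al*be/(2*P*Q))*((c/(32*a^2*al^2))*Q/(16*r^2*be^2)) = c^2/(256*a*al*P*r*be)"
  using assms by (simp add: field_simps power2_eq_square)

lemma region3:
  fixes a r m :: real
  assumes a0: "0 < a" and a1: "a < 1" and r1: "1 < r" and ar1: "1 < a*r" and m: "0 < m"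
    and E1: "(1-a^2)*a/(4*(1+a^2)^4) = -(G a (-a) 1 + G a r m + G a (-r) m)"
    and E3: "(1-r^2)*r/(4*(1+r^2)^4) = -(G r a 1 + G r (-a) 1 + G r (-r) m)"
  shows False
proof -
  have aa: "a*a < 1" using mult_strict_mono[of a 1 a 1] a0 a1 by simp
  have r0: "0 < r" using r1 by simp
  have rr: "1 < r*r" using mult_strict_mono[of 1 r 1 r] r1 by simp
  define c where "c = (a^2+1)^2"
  define R where "R = (r^2+1)^2"
  define P where "P = ((1+a*r)*(r-a))^2"
  define Q where "Q = ((a*r-1)*(r+a))^2"
  define C1 where "C1 = c/(32*a^2*(1-a^2)^2)"
  define w where "w = m*R"
  define Y where "Y = w/(32*r^2*(r^2-1)^2)"
  define L1 where "L1 = (1-a^2)*a/(4*(1+a^2)^4)"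
  define N where "N = r*(r^2-1)/(4*(1+r^2)^4)"
  define T1 where "T1 = c/(8*Q) - c/(8*P)"
  have g1: "G a (-a) 1 = - C1"
  proof -
    have s1: "sgn (a * - a + 1) = 1" using aa by simp
    have s2: "sgn (- a - a) = - 1" using a0 by simp
    have d: "8*(a * - a + 1)^2*(a - - a)^2 = 32*a^2*(1-a^2)^2" by algebra
    have n1: "a * - a + 1 \<noteq> 0" using aa by simp
    have n2: "a \<noteq> - a" using a0 by simp
    show ?thesis unfolding G_val[OF n1 n2] s1 s2 d C1_def c_def by simp
  qed
  have g2: "G a r m = w/(8*P)"
  proof -
    have s1: "sgn (a * r + 1) = 1" using ar1 by simp
    have s2: "sgn (r - a) = 1" using a1 r1 by simp
    have d: "8*(a * r + 1)^2*(a - r)^2 = 8*P" unfolding P_def by algebra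
    have n1: "a * r + 1 \<noteq> 0" using ar1 by simp
    have n2: "a \<noteq> r" using a1 r1 by simp
    show ?thesis unfolding G_val[OF n1 n2] s1 s2 d w_def R_def by simp
  qed
  have g3: "G a (-r) m = w/(8*Q)"
  proof -
    have s1: "sgn (a * - r + 1) = -1" using ar1 by simp
    have s2: "sgn (- r - a) = -1" using a0 r0 by simp
    have d: "8*(a * - r + 1)^2*(a - - r)^2 = 8*Q" unfolding Q_def by algebra
    have n1: "a * - r + 1 \<noteq> 0" using ar1 by simp
    have n2: "a \<noteq> - r" using a0 r0 by simp
    show ?thesis unfolding G_val[OF n1 n2] s1 s2 d w_def R_def by simp
  qed
  have h1: "G r a 1 = - (c/(8*P))"
  proof -
    have s1: "sgn (r * a + 1) = 1" using ar1 by (simp add: mult.commute)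
    have s2: "sgn (a - r) = -1" using a1 r1 by simp
    have d: "8*(r * a + 1)^2*(r - a)^2 = 8*P" unfolding P_def by algebra
    have n1: "r * a + 1 \<noteq> 0" using ar1 by (simp add: mult.commute)
    have n2: "r \<noteq> a" using a1 r1 by simp
    show ?thesis unfolding G_val[OF n1 n2] s1 s2 d c_def by simp
  qed
  have h2: "G r (-a) 1 = c/(8*Q)"
  proof -
    have s1: "sgn (r * - a + 1) = -1" using ar1 by (simp add: mult.commute)
    have s2: "sgn (- a - r) = -1" using a0 r0 by simp
    have d: "8*(r * - a + 1)^2*(r - - a)^2 = 8*Q" unfolding Q_def by algebra
    have n1: "r * - a + 1 \<noteq> 0" using ar1 by (simp add: mult.commute)
    have n2: "r \<noteq> - a" using a0 r0 by simp
    show ?thesis unfolding G_val[OF n1 n2] s1 s2 d c_def by simp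
  qed
  have h3: "G r (-r) m = Y"
  proof -
    have s1: "sgn (r * - r + 1) = -1" using rr by simp
    have s2: "sgn (- r - r) = -1" using r0 by simp
    have d: "8*(r * - r + 1)^2*(r - - r)^2 = 32*r^2*(r^2-1)^2" by algebra
    have n1: "r * - r + 1 \<noteq> 0" using rr by simp
    have n2: "r \<noteq> - r" using r0 by simp
    show ?thesis unfolding G_val[OF n1 n2] s1 s2 d Y_def w_def R_def by simp
  qed
  have eq1: "w/(8*P) + w/(8*Q) = C1 - L1" using E1 g1 g2 g3 unfolding L1_def by linarith
  have L3N: "(1-r^2)*r/(4*(1+r^2)^4) = - N" unfolding N_def minus_divide_left
    by (rule arg_cong[where f="\<lambda>t. t / _"]) algebra
  have eq3: "N = T1 + Y" using E3 h1 h2 h3 L3N unfolding T1_def by linarith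
  have a2: "0 < 1-a^2" using aa by (simp add: power2_eq_square)
  have r2: "0 < r^2-1" using rr by (simp add: power2_eq_square)
  have sP: "0 < (1+a*r)*(r-a)" using ar1 a1 r1 by simp
  have sQ: "0 < (a*r-1)*(r+a)" using ar1 a0 r0 by simp
  have P0: "0 < P" unfolding P_def using sP by (rule zero_less_power)
  have Q0: "0 < Q" unfolding Q_def using sQ by (rule zero_less_power)
  have QP: "Q < P"
  proof -
    have "(1+a*r)*(r-a) - (a*r-1)*(r+a) = 2*r*(1-a^2)" by algebra
    then have "(a*r-1)*(r+a) < (1+a*r)*(r-a)" using r0 a2 by (smt (verit) mult_pos_pos)
    then show ?thesis unfolding P_def Q_def using sQ by (simp add: power_strict_mono)
  qed
  have PQ: "P - Q = 4*a*r*(1-a^2)*(r^2-1)" unfolding P_def Q_def by algebra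
  have Pb: "P < r^2*(r+1)^2"
  proof -
    have e: "(1+a*r)*(r-a) = r*(1-a^2) + a*(r^2-1)" by algebra
    have "r*(1-a^2) < r" using r0 a0 by (simp add: power2_eq_square)
    moreover have "a*(r^2-1) < r^2-1" using r2 a1 by simp
    ultimately have "(1+a*r)*(r-a) < r*(r+1)" unfolding e by (simp add: algebra_simps power2_eq_square)
    then have "((1+a*r)*(r-a))^2 < (r*(r+1))^2" using sP by (simp add: power_strict_mono)
    then show ?thesis unfolding P_def by (simp add: power_mult_distrib)
  qed
  have c1: "1 \<le> c" unfolding c_def by (simp add: one_le_power)
  have jc: "4*a*(1-a^2) \<le> c"
  proof -
    have "c - 4*a*(1-a^2) = (a^2+2*a-1)^2" unfolding c_def by algebra
    then show ?thesis using zero_le_power2[of "a^2+2*a-1"] by linarith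
  qed
  have j0: "0 \<le> 4*a*(1-a^2)" using a0 a2 by simp
  have S1: "L1 \<le> C1/2"
  proof -
    have h: "C1/2 = c/(64*a^2*(1-a^2)^2)" unfolding C1_def by simp
    have "(1-a^2)*a/(4*(1+a^2)^4) \<le> c/(64*a^2*(1-a^2)^2)"
    proof (rule frac_le)
      have "0 < 1+a^2" using zero_le_power2[of a] by linarith
      then show "0 < 4*(1+a^2)^4" by simp
      show "0 < 64*a^2*(1-a^2)^2" using a0 a2 by simp
      have l: "(1-a^2)*a * (64*a^2*(1-a^2)^2) = (4*a*(1-a^2))^3" by algebra
      have rr': "c * (4*(1+a^2)^4) = 4*c^3" unfolding c_def by algebra
      have "(4*a*(1-a^2))^3 \<le> c^3" using power_mono[OF jc j0] by simp
      moreover have "0 \<le> c^3" using c1 by simp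
      ultimately show "(1-a^2)*a * (64*a^2*(1-a^2)^2) \<le> c * (4*(1+a^2)^4)"
        unfolding l rr' by linarith
    qed
    then show ?thesis unfolding h L1_def .
  qed
  have "0 < r^2+1" using zero_le_power2[of r] by linarith
  then have w0: "0 < w" unfolding w_def R_def using m by simp
  have "w/(8*P) \<le> w/(8*Q)" using w0 Q0 QP by (simp add: divide_left_mono)
  then have S2: "C1/4 \<le> w/(8*Q)" using eq1 S1 by linarith
  have C10: "0 < C1" unfolding C1_def using c1 a0 a2 by simp
  have S3: "C1*Q/(16*r^2*(r^2-1)^2) \<le> Y"
  proof -
    have e1: "Y = (w/(8*Q)) * (Q/(4*r^2*(r^2-1)^2))" unfolding Y_def using Q0 by (simp add: field_simps)
    have e2: "C1*Q/(16*r^2*(r^2-1)^2) = (C1/4) * (Q/(4*r^2*(r^2-1)^2))" by (simp add: field_simps)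
    have B0: "0 \<le> Q/(4*r^2*(r^2-1)^2)" using Q0 by simp
    show ?thesis unfolding e1 e2 by (rule mult_right_mono[OF S2 B0])
  qed
  have S4: "T1 = c*a*r*(1-a^2)*(r^2-1)/(2*P*Q)"
  proof -
    have "T1 = c*(P-Q)/(8*P*Q)" unfolding T1_def using P0 Q0 by (simp add: field_simps)
    then show ?thesis unfolding PQ using P0 Q0 by (simp add: field_simps)
  qed
  have T10: "0 \<le> T1" unfolding S4 using c1 a0 r0 a2 r2 P0 Q0 by simp
  define Z where "Z = c^2/(256*a*(1-a^2)*P*r*(r^2-1))"
  have S5: "Z \<le> 4*T1*Y"
  proof -
    have "4*T1*(C1*Q/(16*r^2*(r^2-1)^2)) \<le> 4*T1*Y" using mult_left_mono[OF S3, of "4*T1"] T10 by simp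
    moreover have "4*T1*(C1*Q/(16*r^2*(r^2-1)^2)) = Z"
      unfolding S4 C1_def Z_def using a0 a2 r0 r2 P0 Q0 by (intro Zeq) simp_all
    ultimately show ?thesis by simp
  qed
  have S6: "N^2 < Z"
  proof -
    have n: "N^2 = (r*(r^2-1))^2/(16*(1+r^2)^8)" unfolding N_def by (simp add: power_divide power_mult_distrib)
    have "(r*(r^2-1))^2/(16*(1+r^2)^8) < c^2/(256*a*(1-a^2)*P*r*(r^2-1))"
    proof (rule frac_less)
      have "0 < 1+r^2" using zero_le_power2[of r] by linarith
      then show "0 < 16*(1+r^2)^8" by simp
      show "0 < 256*a*(1-a^2)*P*r*(r^2-1)" using a0 a2 P0 r0 r2 by simp
      have l: "(r*(r^2-1))^2 * (256*a*(1-a^2)*P*r*(r^2-1)) = 16*(4*a*(1-a^2))*4*P*(r^3*(r^2-1)^3)" by algebra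
      have k0: "0 < r^3*(r^2-1)^3" using r0 r2 by simp
      have "16*(4*a*(1-a^2))*4*P*(r^3*(r^2-1)^3) \<le> 16*c*4*P*(r^3*(r^2-1)^3)"
        using jc P0 k0 by (simp add: mult_right_mono)
      also have "\<dots> < 16*c*4*(r^2*(r+1)^2)*(r^3*(r^2-1)^3)"
        using mult_strict_left_mono[OF mult_strict_right_mono[OF Pb k0], of "16*c*4"] c1 by (simp add: mult.assoc)
      also have "\<dots> = 16*c*(4*r^5*(r-1)^3*(r+1)^5)" by algebra
      also have "\<dots> < 16*c*(1+r^2)^8" using poly_r[OF r1] c1 by simp
      also have "\<dots> \<le> c^2 * (16*(1+r^2)^8)"
      proof -
        have "c \<le> c^2" using c1 by (simp add: power2_eq_square)
        moreover have "0 \<le> 16*(1+r^2)^8" by simp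
        ultimately have "c * (16*(1+r^2)^8) \<le> c^2*(16*(1+r^2)^8)" by (rule mult_right_mono)
        moreover have "16*c*(1+r^2)^8 = c * (16*(1+r^2)^8)" by simp
        ultimately show ?thesis by linarith
      qed
      finally show "(r*(r^2-1))^2 * (256*a*(1-a^2)*P*r*(r^2-1)) < c^2 * (16*(1+r^2)^8)"
        unfolding l .
    qed
    then show ?thesis unfolding n Z_def .
  qed
  have "4*T1*Y \<le> (T1+Y)^2"
  proof -
    have "(T1+Y)^2 - 4*T1*Y = (T1-Y)^2" by algebra
    then show ?thesis using zero_le_power2[of "T1-Y"] by linarith
  qed
  moreover have "N^2 = (T1+Y)^2" using eq3 by simp
  ultimately show False using S5 S6 by linarith
qed

lemma sets4: "{..<4::nat} - {0} = {1,2,3}" "{..<4::nat} - {2} = {0,1,3}" by auto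

theorem corollary1:
  fixes a r m :: real
  assumes "0 < a" and "a < r" and "0 < m"
  assumes "\<not> singular_config 4 (\<lambda>i. [complex_of_real a, - complex_of_real a,
                                      complex_of_real r, - complex_of_real r] ! i)"
  shows "\<not> relative_equilibrium 4 (\<lambda>i. [1, 1, m, m] ! i)
           (\<lambda>i. [complex_of_real a, - complex_of_real a,
                 complex_of_real r, - complex_of_real r] ! i)"
proof
  define x where "x = (\<lambda>i. [a, -a, r, -r] ! i)"
  define z where "z = (\<lambda>i. [complex_of_real a, - complex_of_real a,
                 complex_of_real r, - complex_of_real r] ! i)"
  assume re: "relative_equilibrium 4 (\<lambda>i. [1, 1, m, m] ! i)
           (\<lambda>i. [complex_of_real a, - complex_of_real a,
                 complex_of_real r, - complex_of_real r] ! i)"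
  have zx: "\<And>i. i < 4 \<Longrightarrow> [complex_of_real a, - complex_of_real a,
                 complex_of_real r, - complex_of_real r] ! i = complex_of_real (x i)"
    unfolding x_def by (auto simp: less_Suc_eq numeral_eq_Suc)
  note e1 = re_real[OF re zx, of 0, folded G_def]
  note e3 = re_real[OF re zx, of 2, folded G_def]
  have E1: "(1-a^2)*a/(4*(1+a^2)^4) = -(G a (-a) 1 + G a r m + G a (-r) m)"
    using e1 by (simp add: sets4 x_def)
  have E3: "(1-r^2)*r/(4*(1+r^2)^4) = -(G r a 1 + G r (-a) 1 + G r (-r) m)"
    using e3 by (simp add: sets4 x_def)
  have ns: "\<And>i j. i < 4 \<Longrightarrow> j < 4 \<Longrightarrow> i \<noteq> j \<Longrightarrow> Tij z i j \<noteq> 0"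
    using assms(4) unfolding singular_config_def z_def by blast
  have z0: "z 0 = complex_of_real a" and z1: "z 1 = complex_of_real (-a)"
    and z2: "z 2 = complex_of_real r" and z3: "z 3 = complex_of_real (-r)"
    unfolding z_def by simp_all
  have "4*(a*(-a)+1)^2*(a-(-a))^2 \<noteq> 0" using ns[of 0 1] Tij_real[OF z0 z1] by simp
  then have na: "a*a \<noteq> 1" by simp
  have "4*(r*(-r)+1)^2*(r-(-r))^2 \<noteq> 0" using ns[of 2 3] Tij_real[OF z2 z3] by simp
  then have nr: "r*r \<noteq> 1" by simp
  have "4*(a*(-r)+1)^2*(a-(-r))^2 \<noteq> 0" using ns[of 0 3] Tij_real[OF z0 z3] by simp
  then have nar: "a*r \<noteq> 1" by simp
  have a1: "a \<noteq> 1" using na by auto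
  have r1: "r \<noteq> 1" using nr by auto
  show False
  proof (cases "1 < a")
    case True
    then show False using region4[OF True assms(2) assms(3) E1] by simp
  next
    case False
    then have a1': "a < 1" using a1 by simp
    show False
    proof (cases "r < 1")
      case True
      then show False using region1[OF assms(1) assms(2) True assms(3) E3] by simp
    next
      case False
      then have r1': "1 < r" using r1 by simp
      show False
      proof (cases "a*r < 1")
        case True
        then show False using regionB[OF assms(1) a1' r1' True assms(3) E1] by simp
      next
        case False
        then have "1 < a*r" using nar by simp
        then show False using region3[OF assms(1) a1' r1' _ assms(3) E1 E3] by simp
      qed
    qed
  qed
qed

end
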